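(* Let $p_0$ be a uniformly continuous density on $\mathbb{R}$, and let $z_{\min} := \inf\{z:p_0(z)>0\}$ and $z_{\max} := \sup\{z:p_0(z)>0\}$. Then (a) $\lim_{z\to-\infty}\psi_0^*(z)<\infty$ if and only if $\limsup_{z\searrow z_{\min}}h_0(z)<\infty$, in which case $z_{\min} = -\infty$; (b) $\lim_{z\to\infty}\psi_0^*(z)>-\infty$ if and only if $\limsup_{z\nearrow z_{\max}}h_0(z)<\infty$, in which case $z_{\max} = \infty$.
   Context: Convention $0/0:=0$. $F_0$ is the distribution function of $p_0$, $F_0^{-1}(u) := \inf\{z\in[-\infty,\infty]:F_0(z)\ge u\}$, $J_0 := p_0\circ F_0^{-1}$ on $[0,1]$, $\hat J_0$ its least concave majorant on $[0,1]$, and $\psi_0^* := \hat J_0^{(\mathrm{R})}\circ F_0\colon\mathbb{R}\to[-\infty,\infty]$ (right derivative; value at $1$ defined as the left limit). The two-sided hazard function is $h_0(z) := p_0(z)/\bigl(F_0(z)\wedge(1 - F_0(z))\bigr)$, so that $h_0(z) = 0$ whenever $F_0(z)\in\{0,1\}$. *)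

theory Defs
  imports "HOL-Analysis.Analysis"
begin

definition cdf_of :: "(real \<Rightarrow> real) \<Rightarrow> real \<Rightarrow> real" where
  "cdf_of p z = (LINT x:{..z}|lborel. p x)"

definition cdf_ext :: "(real \<Rightarrow> real) \<Rightarrow> ereal \<Rightarrow> real" where
  "cdf_ext p z = (if z = -\<infinity> then 0 else if z = \<infinity> then 1 else cdf_of p (real_of_ereal z))"

definition dens_ext :: "(real \<Rightarrow> real) \<Rightarrow> ereal \<Rightarrow> real" where
  "dens_ext p z = (if z = -\<infinity> \<or> z = \<infinity> then 0 else p (real_of_ereal z))"

definition quantile :: "(real \<Rightarrow> real) \<Rightarrow> real \<Rightarrow> ereal" where
  "quantile p u = Inf {z::ereal. cdf_ext p z \<ge> u}"

definition Jfun :: "(real \<Rightarrow> real) \<Rightarrow> real \<Rightarrow> real" where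
  "Jfun p u = dens_ext p (quantile p u)"

text \<open>Least concave majorant of J on [0,1] (pointwise infimum of all concave majorants).\<close>
definition lcm01 :: "(real \<Rightarrow> real) \<Rightarrow> real \<Rightarrow> real" where
  "lcm01 J u = Inf {g u | g. concave_on {0..1} g \<and> (\<forall>v\<in>{0..1}. J v \<le> g v)}"

definition rderiv :: "(real \<Rightarrow> real) \<Rightarrow> real \<Rightarrow> ereal" where
  "rderiv f u = Lim (at_right u) (\<lambda>v. ereal ((f v - f u) / (v - u)))"

definition rderiv01 :: "(real \<Rightarrow> real) \<Rightarrow> real \<Rightarrow> ereal" where
  "rderiv01 f u = (if u = 1 then Lim (at_left 1) (rderiv f) else rderiv f u)"

definition psi_star :: "(real \<Rightarrow> real) \<Rightarrow> real \<Rightarrow> ereal" where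
  "psi_star p z = rderiv01 (lcm01 (Jfun p)) (cdf_of p z)"

text \<open>Two-sided hazard function; Isabelle's x/0 = 0 realises the conventions 0/0 = 0
  and h_0(z) = 0 whenever F_0(z) is 0 or 1.\<close>
definition hazard2 :: "(real \<Rightarrow> real) \<Rightarrow> real \<Rightarrow> real" where
  "hazard2 p z = p z / min (cdf_of p z) (1 - cdf_of p z)"

definition zmin :: "(real \<Rightarrow> real) \<Rightarrow> ereal" where
  "zmin p = Inf {ereal z | z. p z > 0}"

definition zmax :: "(real \<Rightarrow> real) \<Rightarrow> ereal" where
  "zmax p = Sup {ereal z | z. p z > 0}"

definition from_above :: "ereal \<Rightarrow> real filter" where
  "from_above a = (if a = -\<infinity> then at_bot else at_right (real_of_ereal a))"

definition from_below :: "ereal \<Rightarrow> real filter" where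
  "from_below b = (if b = \<infinity> then at_top else at_left (real_of_ereal b))"

end

theory Submission
  imports Defs
begin


definition slope :: "(real \<Rightarrow> real) \<Rightarrow> real \<Rightarrow> real \<Rightarrow> real" where
  "slope f a b = (f b - f a) / (b - a)"

lemma H_div: "(- A - - C) / (a - c) = - ((C - (A::real)) / (c - a))"
proof -
  have "- A - - C = C - A" by simp
  moreover have "a - c = - (c - a)" by simp
  ultimately show ?thesis by (simp only: divide_minus_right)
qed

lemma conc_slope:
  assumes f: "concave_on {0..1} f" and "0 \<le> w" "w < u" "u < v" "v \<le> 1"
  shows "slope f u v \<le> slope f w v" "slope f w v \<le> slope f w u"
proof -
  have c: "convex_on {0..1} (\<lambda>x. - f x)" using f by (simp add: concave_on_def)
  note cs = convex_on_slope_le[OF c, of w v u]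
  have 1: "(- f w - - f u) / (w - u) \<le> (- f w - - f v) / (w - v)"
    using cs(1) assms by auto
  have 2: "(- f w - - f v) / (w - v) \<le> (- f u - - f v) / (u - v)"
    using cs(2) assms by auto
  have e1: "(- f w - - f u) / (w - u) = - slope f w u" unfolding slope_def
    by (rule H_div)
  have e2: "(- f w - - f v) / (w - v) = - slope f w v" unfolding slope_def
    by (rule H_div)
  have e3: "(- f u - - f v) / (u - v) = - slope f u v" unfolding slope_def
    by (rule H_div)
  show "slope f u v \<le> slope f w v" "slope f w v \<le> slope f w u"
    using 1 2 unfolding e1 e2 e3 by auto
qed

lemma concave_affine: "concave_on {0..1} (\<lambda>u::real. c + d * u)"
  unfolding concave_on_iff
proof (intro conjI ballI allI impI)
  fix x y a b :: real assume "a + b = 1"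
  have "a * (c + d * x) + b * (c + d * y) = (a + b) * c + d * (a * x + b * y)"
    by (simp add: algebra_simps)
  then have "c + d * (a * x + b * y) = a * (c + d * x) + b * (c + d * y)"
    using \<open>a + b = 1\<close> by simp
  then show "a * (c + d * x) + b * (c + d * y) \<le> c + d * (a *\<^sub>R x + b *\<^sub>R y)" by simp
qed (simp add: convex_real_interval)

lemma rderiv_eq:
  assumes f: "concave_on {0..1} f" and u: "0 \<le> u" "u < 1"
  shows "rderiv f u = (SUP v\<in>{u<..1}. ereal (slope f u v))"
proof -
  let ?S = "(SUP v\<in>{u<..1}. ereal (slope f u v))"
  have "((\<lambda>v. ereal ((f v - f u) / (v - u))) \<longlongrightarrow> ?S) (at_right u)"
  proof (rule order_tendstoI)
    fix a assume "a < ?S"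
    then obtain v0 where v0: "v0 \<in> {u<..1}" "a < ereal (slope f u v0)"
      by (auto simp: less_SUP_iff)
    show "\<forall>\<^sub>F v in at_right u. a < ereal ((f v - f u) / (v - u))"
      unfolding eventually_at_right_field
    proof (intro exI[of _ v0] conjI allI impI)
      show "u < v0" using v0 by simp
      fix v assume v: "u < v" "v < v0"
      have "slope f u v0 \<le> slope f u v" using conc_slope(2)[OF f, of u v v0] u v v0 by auto
      then show "a < ereal ((f v - f u) / (v - u))" using v0 unfolding slope_def
        by (meson ereal_less_eq(3) less_le_trans)
    qed
  next
    fix a assume "?S < a"
    show "\<forall>\<^sub>F v in at_right u. ereal ((f v - f u) / (v - u)) < a"
      unfolding eventually_at_right_field
    proof (intro exI[of _ 1] conjI allI impI)
      show "u < 1" using u by simp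
      fix v assume v: "u < v" "v < 1"
      have "ereal (slope f u v) \<le> ?S" using v by (intro SUP_upper) auto
      then have "ereal (slope f u v) < a" using \<open>?S < a\<close> by (rule le_less_trans)
      then show "ereal ((f v - f u) / (v - u)) < a" unfolding slope_def .
    qed
  qed
  then show ?thesis unfolding rderiv_def by (intro tendsto_Lim) auto
qed

lemma rderiv_upper:
  assumes f: "concave_on {0..1} f" and "0 \<le> w" "w < u" "u < 1"
  shows "rderiv f u \<le> ereal (slope f w u)"
proof -
  have "rderiv f u = (SUP v\<in>{u<..1}. ereal (slope f u v))" using assms by (intro rderiv_eq) auto
  also have "\<dots> \<le> ereal (slope f w u)"
  proof (rule SUP_least)
    fix v assume "v \<in> {u<..1}"
    then show "ereal (slope f u v) \<le> ereal (slope f w u)"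
      using conc_slope[OF f, of w u v] assms by auto
  qed
  finally show ?thesis .
qed

lemma rderiv_lower:
  assumes f: "concave_on {0..1} f" and "0 \<le> u" "u < v" "v \<le> 1"
  shows "ereal (slope f u v) \<le> rderiv f u"
proof -
  have "rderiv f u = (SUP v\<in>{u<..1}. ereal (slope f u v))" using assms by (intro rderiv_eq) auto
  then show ?thesis using assms by (auto intro: SUP_upper)
qed

lemma rderiv_mono:
  assumes f: "concave_on {0..1} f" and "0 \<le> u" "u < u'" "u' < 1"
  shows "rderiv f u' \<le> rderiv f u"
proof -
  have "rderiv f u' \<le> ereal (slope f u u')" by (rule rderiv_upper[OF f]) (use assms in auto)
  also have "\<dots> \<le> rderiv f u" by (rule rderiv_lower[OF f]) (use assms in auto)
  finally show ?thesis .
qed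

lemma rderiv01_1:
  assumes f: "concave_on {0..1} f"
  shows "rderiv01 f 1 = (INF u\<in>{0..<1}. rderiv f u)"
proof -
  let ?I = "(INF u\<in>{0..<1}. rderiv f u)"
  have "(rderiv f \<longlongrightarrow> ?I) (at_left 1)"
  proof (rule order_tendstoI)
    fix a assume "a < ?I"
    show "\<forall>\<^sub>F v in at_left 1. a < rderiv f v"
      unfolding eventually_at_left_field
    proof (intro exI[of _ 0] conjI allI impI)
      fix v :: real assume v: "0 < v" "v < 1"
      have "?I \<le> rderiv f v" using v by (intro INF_lower) auto
      with \<open>a < ?I\<close> show "a < rderiv f v" by (rule less_le_trans)
    qed simp
  next
    fix a assume "?I < a"
    then obtain u0 where u0: "u0 \<in> {0..<1}" "rderiv f u0 < a"
      by (auto simp: INF_less_iff)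
    show "\<forall>\<^sub>F v in at_left 1. rderiv f v < a"
      unfolding eventually_at_left_field
    proof (intro exI[of _ u0] conjI allI impI)
      show "u0 < 1" using u0 by simp
      fix v assume v: "u0 < v" "v < 1"
      have "rderiv f v \<le> rderiv f u0" by (rule rderiv_mono[OF f]) (use u0 v in auto)
      then show "rderiv f v < a" using u0(2) by (rule le_less_trans)
    qed
  qed
  then have "Lim (at_left 1) (rderiv f) = ?I" by (intro tendsto_Lim) auto
  then show ?thesis unfolding rderiv01_def by simp
qed

lemma rderiv01_antimono:
  assumes f: "concave_on {0..1} f" and "0 \<le> u" "u \<le> u'" "u' \<le> 1"
  shows "rderiv01 f u' \<le> rderiv01 f u"
proof (cases "u = u'")
  case False
  then have uu: "u < u'" "u < 1" using assms by auto
  show ?thesis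
  proof (cases "u' = 1")
    case True
    have "rderiv01 f u' = (INF u\<in>{0..<1}. rderiv f u)" using True rderiv01_1[OF f] by simp
    also have "\<dots> \<le> rderiv f u" using uu assms by (intro INF_lower) auto
    also have "\<dots> = rderiv01 f u" using uu unfolding rderiv01_def by simp
    finally show ?thesis .
  next
    case False
    have "rderiv f u' \<le> rderiv f u" using uu assms False by (intro rderiv_mono[OF f]) auto
    then show ?thesis using False uu unfolding rderiv01_def by simp
  qed
next
  case True
  then show ?thesis by simp
qed




locale dens =
  fixes p :: "real \<Rightarrow> real"
  assumes nonneg: "\<And>z. p z \<ge> 0" and intp: "integrable lborel p"
    and total: "integral\<^sup>L lborel p = 1" and unif: "uniformly_continuous_on UNIV p"
begin

abbreviation "F \<equiv> cdf_of p"

lemma p_isCont: "isCont p x"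
  using uniformly_continuous_imp_continuous[OF unif] continuous_on_eq_continuous_at by blast

lemma setint: "A \<in> sets lborel \<Longrightarrow> set_integrable lborel A p"
  unfolding set_integrable_def using integrable_mult_indicator[OF _ intp] by simp

lemma F_diff: "a \<le> b \<Longrightarrow> F b - F a = (LINT x:{a<..b}|lborel. p x)"
proof -
  assume "a \<le> b"
  then have "{..b} = {..a} \<union> {a<..b}" by auto
  then have "F b = (LINT x:{..a} \<union> {a<..b}|lborel. p x)" by (simp add: cdf_of_def)
  also have "\<dots> = (LINT x:{..a}|lborel. p x) + (LINT x:{a<..b}|lborel. p x)"
    by (rule set_integral_Un) (auto simp: setint)
  finally have "F b = (LINT x:{..a}|lborel. p x) + (LINT x:{a<..b}|lborel. p x)" .
  then show ?thesis unfolding cdf_of_def by simp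
qed

lemma int_const: "(a::real) \<le> b \<Longrightarrow> (LINT x:{a<..b}|lborel. (c::real)) = c * (b - a)"
  by (subst set_integral_const) auto

lemma setint_const: "(a::real) \<le> b \<Longrightarrow> set_integrable lborel {a<..b} (\<lambda>x. c::real)"
proof -
  assume "a \<le> b"
  then have "integrable lborel (indicator {a<..b} :: real \<Rightarrow> real)"
    by (intro integrable_real_indicator) (auto simp: emeasure_lborel_Ioc)
  then show ?thesis unfolding set_integrable_def by simp
qed

lemma int_lower: "a \<le> b \<Longrightarrow> (\<And>x. a < x \<Longrightarrow> x \<le> b \<Longrightarrow> c \<le> p x) \<Longrightarrow> c * (b - a) \<le> F b - F a"
  apply (simp add: F_diff flip: int_const)
  by (rule set_integral_mono[OF setint_const setint]) auto

lemma int_upper: "a \<le> b \<Longrightarrow> (\<And>x. a < x \<Longrightarrow> x \<le> b \<Longrightarrow> p x \<le> c) \<Longrightarrow> F b - F a \<le> c * (b - a)"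
  apply (simp add: F_diff flip: int_const)
  by (rule set_integral_mono[OF setint setint_const]) auto

lemma F_mono: "a \<le> b \<Longrightarrow> F a \<le> F b"
  using int_lower[of a b 0] nonneg by force

lemma F_nonneg: "F x \<ge> 0"
  unfolding cdf_of_def set_lebesgue_integral_def
  by (rule Bochner_Integration.integral_nonneg) (auto simp: nonneg)

lemma F_le1: "F x \<le> 1"
proof -
  have "F x = (\<integral>y. indicator {..x} y * p y \<partial>lborel)"
    unfolding cdf_of_def set_lebesgue_integral_def by simp
  also have "\<dots> \<le> (\<integral>y. p y \<partial>lborel)"
    using integrable_mult_indicator[OF _ intp, of "{..x}"]
    by (intro integral_mono) (auto simp: nonneg intp split: split_indicator)
  finally show ?thesis using total by simp
qed

lemma F_top: "(F \<longlongrightarrow> 1) at_top"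
  using tendsto_integral_at_top[of lborel p] intp total
  unfolding cdf_of_def set_lebesgue_integral_def by simp

lemma F_bot: "(F \<longlongrightarrow> 0) at_bot"
proof -
  have "((\<lambda>t. integral\<^sup>L lborel (\<lambda>x. indicator {..-t} x * p x)) \<longlongrightarrow> integral\<^sup>L lborel (\<lambda>x::real. 0::real)) at_top"
  proof (rule integral_dominated_convergence_at_top[where s="\<lambda>t x. indicator {..-t} x * p x" and f="\<lambda>x. 0::real" and w=p and M=lborel])
    show "AE x in lborel. ((\<lambda>t. indicator {..-t} x * p x) \<longlongrightarrow> 0) at_top"
    proof (rule AE_I2)
      fix x
      have "eventually (\<lambda>t. indicator {..-t} x * p x = 0) at_top"
        using eventually_gt_at_top[of "-x"] by eventually_elim (auto simp: indicator_def)
      then show "((\<lambda>t. indicator {..-t} x * p x) \<longlongrightarrow> 0) at_top"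
        by (rule tendsto_eventually)
    qed
    show "\<forall>\<^sub>F i in at_top. AE x in lborel. norm (indicator {..-i} x * p x) \<le> p x"
      by (auto simp: indicator_def nonneg)
  qed (use intp in auto)
  then have "((\<lambda>t. F (-t)) \<longlongrightarrow> 0) at_top"
    unfolding cdf_of_def set_lebesgue_integral_def by simp
  then show ?thesis
    by (simp add: filterlim_at_bot_mirror)
qed

lemma unif_bound: "e > 0 \<Longrightarrow> \<exists>d>0. \<forall>x. p x \<le> e + (F x - F (x - d)) / d \<and> p x \<le> e + (F (x + d) - F x) / d"
proof -
  assume e: "e > 0"
  obtain d where d: "d > 0" "\<And>x x'. dist x' x < d \<Longrightarrow> dist (p x') (p x) < e"
    using unif e unfolding uniformly_continuous_on_def by blast
  have near: "p x - e \<le> p y" if "\<bar>y - x\<bar> \<le> d/2" for x y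
    using d(2)[of y x] that d(1) by (auto simp: dist_real_def)
  show ?thesis
  proof (intro exI[of _ "d/2"] conjI allI)
    show "d/2 > 0" using d by simp
    fix x
    have "(p x - e) * (x - (x - d/2)) \<le> F x - F (x - d/2)"
      by (rule int_lower) (use d near in auto)
    then show "p x \<le> e + (F x - F (x - d/2)) / (d/2)"
      using d by (simp add: field_simps)
    have "(p x - e) * ((x + d/2) - x) \<le> F (x + d/2) - F x"
      by (rule int_lower) (use d near in auto)
    then show "p x \<le> e + (F (x + d/2) - F x) / (d/2)"
      using d by (simp add: field_simps)
  qed
qed

lemma p_bounded: "\<exists>B>0. \<forall>x. p x \<le> B"
proof -
  obtain d where d: "d > 0" "\<And>x. p x \<le> 1 + (F (x + d) - F x) / d"
    using unif_bound[of 1] by auto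
  have "p x \<le> 1 + 1 / d" for x
  proof -
    have "(F (x + d) - F x) / d \<le> 1 / d"
      using d(1) F_le1[of "x+d"] F_nonneg[of x] by (intro divide_right_mono) auto
    then show ?thesis using d(2)[of x] by simp
  qed
  moreover have "1 / d > 0" using d by simp
  then have "1 + 1 / d > 0" by linarith
  ultimately show ?thesis by (intro exI[of _ "1 + 1/d"]) auto
qed

definition B where "B = (SOME B. B > 0 \<and> (\<forall>x. p x \<le> B))"

lemma B: "B > 0" "p x \<le> B"
  using someI_ex[OF p_bounded[unfolded Ex_def[symmetric]]] unfolding B_def
  by (metis (mono_tags, lifting) p_bounded someI_ex)+

lemma F_lip: "\<bar>F b - F a\<bar> \<le> B * \<bar>b - a\<bar>"
proof (cases "a \<le> b")
  case True
  then show ?thesis using int_upper[of a b B] F_mono[OF True] B by auto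
next
  case False
  then show ?thesis using int_upper[of b a B] F_mono[of b a] B by auto
qed

lemma F_cont: "continuous_on UNIV F"
proof (rule lipschitz_on_continuous_on)
  show "B-lipschitz_on UNIV F"
    unfolding lipschitz_on_def using F_lip B by (auto simp: dist_real_def)
qed

lemma F_isCont: "isCont F x"
  using F_cont continuous_on_eq_continuous_at by blast

lemma F_strict: "a < b \<Longrightarrow> a \<le> c \<Longrightarrow> c \<le> b \<Longrightarrow> p c > 0 \<Longrightarrow> F a < F b"
proof -
  assume ab: "a < b" "a \<le> c" "c \<le> b" "p c > 0"
  obtain h where h: "h > 0" "\<And>y. \<bar>y - c\<bar> < h \<Longrightarrow> p y > p c / 2"
  proof -
    have "\<forall>\<^sub>F y in at c. p y > p c / 2"
      using p_isCont[of c] ab(4) unfolding isCont_def by (intro order_tendstoD(1)) auto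
    then obtain h where "h > 0" "\<And>y. y \<noteq> c \<Longrightarrow> dist y c < h \<Longrightarrow> p y > p c / 2"
      unfolding eventually_at by auto
    note hh = this
    show ?thesis
    proof (rule that[of h])
      fix y assume y: "\<bar>y - c\<bar> < h"
      show "p y > p c / 2"
      proof (cases "y = c")
        case True then show ?thesis using ab(4) by simp
      next
        case False then show ?thesis using hh(2)[of y] y by (simp add: dist_real_def)
      qed
    qed (use hh in auto)
  qed
  show "F a < F b"
  proof (cases "c < b")
    case True
    define c' where "c' = min b (c + h/2)"
    have hx: "p c / 2 \<le> p x" if "c < x" "x \<le> c'" for x
    proof -
      have "\<bar>x - c\<bar> < h" using that h(1) c'_def by auto
      then show ?thesis using h(2)[of x] by simp
    qed
    have "p c / 2 * (c' - c) \<le> F c' - F c"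
      by (rule int_lower) (use hx c'_def ab h(1) in auto)
    moreover have "p c / 2 * (c' - c) > 0" using True h ab c'_def by auto
    moreover have "F a \<le> F c" "F c' \<le> F b" using ab c'_def by (auto intro: F_mono)
    ultimately show ?thesis by linarith
  next
    case False
    then have cb: "c = b" using ab by auto
    define c' where "c' = max a (c - h/2)"
    have hx: "p c / 2 \<le> p x" if "c' < x" "x \<le> c" for x
    proof -
      have "\<bar>x - c\<bar> < h" using that h(1) c'_def by auto
      then show ?thesis using h(2)[of x] by simp
    qed
    have "p c / 2 * (c - c') \<le> F c - F c'"
      by (rule int_lower) (use hx c'_def ab h(1) in auto)
    moreover have "p c / 2 * (c - c') > 0" using cb h ab c'_def by auto
    moreover have "F a \<le> F c'" "F c \<le> F b" using ab c'_def by (auto intro: F_mono)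
    ultimately show ?thesis by linarith
  qed
qed

lemma F_eventually_small: "u > 0 \<Longrightarrow> \<exists>N. \<forall>z\<le>N. F z < u"
proof -
  assume "u > 0"
  then have "\<forall>\<^sub>F z in at_bot. F z < u" using F_bot by (rule order_tendstoD(2)[rotated])
  then show ?thesis unfolding eventually_at_bot_linorder by auto
qed

lemma F_eventually_large: "u < 1 \<Longrightarrow> \<exists>N. \<forall>z\<ge>N. F z > u"
proof -
  assume "u < 1"
  then have "\<forall>\<^sub>F z in at_top. F z > u" using F_top by (rule order_tendstoD(1)[rotated])
  then show ?thesis unfolding eventually_at_top_linorder by auto
qed

lemma quantile_pos:
  assumes "0 < u" "u \<le> 1"
  shows "(\<exists>q. quantile p u = ereal q \<and> F q \<ge> u \<and> (\<forall>z<q. F z < u)) \<or> (quantile p u = \<infinity> \<and> (\<forall>z. F z < u))"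
proof (cases "\<exists>z. F z \<ge> u")
  case False
  have "{z::ereal. cdf_ext p z \<ge> u} = {\<infinity>}"
  proof (intro set_eqI iffI)
    fix z assume "z \<in> {z::ereal. cdf_ext p z \<ge> u}"
    then show "z \<in> {\<infinity>}" using False assms by (cases z) (auto simp: cdf_ext_def)
  qed (use assms in \<open>auto simp: cdf_ext_def\<close>)
  then have "quantile p u = \<infinity>" unfolding quantile_def by simp
  then show ?thesis using False by (auto simp: not_le)
next
  case True
  define A where "A = {z. u \<le> F z}"
  have ne: "A \<noteq> {}" using True A_def by auto
  obtain N where N: "\<forall>z\<le>N. F z < u" using F_eventually_small assms by blast
  have bdd: "bdd_below A"
    unfolding bdd_below_def A_def using N by (metis linorder_not_le mem_Collect_eq nle_le)
  have cl: "closed A" unfolding A_def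
    by (rule closed_Collect_le[OF continuous_on_const F_cont])
  define q where "q = Inf A"
  have qA: "q \<in> A" unfolding q_def by (rule closed_contains_Inf[OF ne bdd cl])
  have below: "F z < u" if "z < q" for z
  proof (rule ccontr)
    assume "\<not> F z < u"
    then have "z \<in> A" unfolding A_def by simp
    then have "q \<le> z" unfolding q_def using bdd by (simp add: cInf_lower)
    then show False using that by simp
  qed
  have "quantile p u = ereal q" unfolding quantile_def
  proof (rule Inf_eqI)
    fix i assume "i \<in> {z::ereal. cdf_ext p z \<ge> u}"
    then have i: "cdf_ext p i \<ge> u" by simp
    show "ereal q \<le> i"
    proof (cases i)
      case (real r)
      then have "r \<in> A" using i unfolding A_def by (simp add: cdf_ext_def)
      then have "q \<le> r" unfolding q_def using bdd by (simp add: cInf_lower)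
      then show ?thesis using real by simp
    next
      case MInf then show ?thesis using i assms by (simp add: cdf_ext_def)
    qed simp
  next
    fix y assume "\<And>i. i \<in> {z::ereal. cdf_ext p z \<ge> u} \<Longrightarrow> y \<le> i"
    moreover have "ereal q \<in> {z::ereal. cdf_ext p z \<ge> u}" using qA unfolding A_def by (simp add: cdf_ext_def)
    ultimately show "y \<le> ereal q" by blast
  qed
  then show ?thesis using qA below unfolding A_def by auto
qed

lemma quantile_mid:
  assumes "0 < u" "u < 1"
  shows "\<exists>q. quantile p u = ereal q \<and> F q = u \<and> (\<forall>z<q. F z < u)"
proof -
  obtain N where N: "\<forall>z\<ge>N. F z > u" using F_eventually_large assms by blast
  then have "\<not> (\<forall>z. F z < u)" by (metis order.refl order.asym)
  then obtain q where q: "quantile p u = ereal q" "F q \<ge> u" "\<forall>z<q. F z < u"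
    using quantile_pos[of u] assms by auto
  have "(F \<longlongrightarrow> F q) (at_left q)"
    using F_isCont[of q] unfolding isCont_def by (rule tendsto_mono[OF at_le, rotated]) simp
  moreover have "\<forall>\<^sub>F z in at_left q. F z \<le> u"
    unfolding eventually_at_left_field using q(3) by (intro exI[of _ "q - 1"]) auto
  ultimately have "F q \<le> u" by (rule tendsto_upperbound) simp
  then show ?thesis using q by auto
qed

abbreviation "J \<equiv> Jfun p"

lemma J0: "J 0 = 0"
proof -
  have "quantile p 0 \<le> -\<infinity>" unfolding quantile_def
    by (rule Inf_lower) (simp add: cdf_ext_def)
  then have "quantile p 0 = -\<infinity>" by simp
  then show ?thesis by (simp add: Jfun_def dens_ext_def)
qed

lemma J_nonneg: "J u \<ge> 0"
  by (simp add: Jfun_def dens_ext_def nonneg)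

lemma J_le_B: "J u \<le> B"
  using B by (simp add: Jfun_def dens_ext_def less_imp_le)

lemma J_mid: "0 < u \<Longrightarrow> u < 1 \<Longrightarrow> \<exists>q. J u = p q \<and> F q = u"
  using quantile_mid[of u] by (auto simp: Jfun_def dens_ext_def)

lemma J1: "J 1 = 0"
proof -
  consider (fin) q where "quantile p 1 = ereal q" "F q \<ge> 1" | (inf) "quantile p 1 = \<infinity>"
    using quantile_pos[of 1] by auto
  then show ?thesis
  proof cases
    case fin
    have "\<not> p q > 0"
    proof
      assume "p q > 0"
      then have "F q < F (q + 1)" by (intro F_strict) auto
      then show False using fin F_le1[of "q+1"] by simp
    qed
    then show ?thesis using fin nonneg[of q] by (simp add: Jfun_def dens_ext_def)
  next
    case inf then show ?thesis by (simp add: Jfun_def dens_ext_def)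
  qed
qed

lemma J_at_F: "0 < F z \<Longrightarrow> F z < 1 \<Longrightarrow> J (F z) = p z"
proof -
  assume z: "0 < F z" "F z < 1"
  obtain q where q: "quantile p (F z) = ereal q" "F q = F z" "\<forall>y<q. F y < F z"
    using quantile_mid[OF z] by blast
  have "q \<le> z" using q(3) by (meson linorder_not_le order.irrefl)
  have "p q = p z"
  proof (cases "q = z")
    case False
    then have qz: "q < z" using \<open>q \<le> z\<close> by simp
    have "\<not> p z > 0" using F_strict[OF qz _ order.refl] qz q(2) by auto
    moreover have "\<not> p q > 0" using F_strict[OF qz order.refl] qz q(2) by auto
    ultimately show ?thesis using nonneg[of q] nonneg[of z] by simp
  qed simp
  then show ?thesis using q by (simp add: Jfun_def dens_ext_def)
qed

lemma J_small0: "e > 0 \<Longrightarrow> \<exists>d>0. \<forall>u\<in>{0..1}. J u \<le> e + u / d"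
proof -
  assume e: "e > 0"
  obtain d where d: "d > 0" "\<And>x. p x \<le> e + (F x - F (x - d)) / d"
    using unif_bound[OF e] by blast
  have "J u \<le> e + u / d" if u: "u \<in> {0..1}" for u
  proof -
    consider "u = 0" | "u = 1" | "0 < u" "u < 1" using u by fastforce
    then show ?thesis
    proof cases
      case 3
      then obtain q where q: "J u = p q" "F q = u" using J_mid by blast
      have "(F q - F (q - d)) / d \<le> F q / d"
        using d(1) F_nonneg[of "q - d"] by (intro divide_right_mono) auto
      then show ?thesis using d(2)[of q] q by simp
    qed (use J0 J1 e d(1) in auto)
  qed
  then show ?thesis using d(1) by blast
qed

lemma J_small1: "e > 0 \<Longrightarrow> \<exists>d>0. \<forall>u\<in>{0..1}. J u \<le> e + (1 - u) / d"
proof -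
  assume e: "e > 0"
  obtain d where d: "d > 0" "\<And>x. p x \<le> e + (F (x + d) - F x) / d"
    using unif_bound[OF e] by blast
  have "J u \<le> e + (1 - u) / d" if u: "u \<in> {0..1}" for u
  proof -
    consider "u = 0" | "u = 1" | "0 < u" "u < 1" using u by fastforce
    then show ?thesis
    proof cases
      case 3
      then obtain q where q: "J u = p q" "F q = u" using J_mid by blast
      have "(F (q + d) - F q) / d \<le> (1 - F q) / d"
        using d(1) F_le1[of "q + d"] by (intro divide_right_mono) auto
      then show ?thesis using d(2)[of q] q by simp
    qed (use J0 J1 e d(1) in auto)
  qed
  then show ?thesis using d(1) by blast
qed

end


context dens begin

abbreviation "Jh \<equiv> lcm01 J"

lemma Jh_le: "concave_on {0..1} g \<Longrightarrow> (\<forall>v\<in>{0..1}. J v \<le> g v) \<Longrightarrow> u \<in> {0..1} \<Longrightarrow> Jh u \<le> g u"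
  unfolding lcm01_def
  by (rule cInf_lower) (auto simp: bdd_below_def intro!: exI[of _ "J u"])

lemma Jh_ge: "u \<in> {0..1} \<Longrightarrow> J u \<le> Jh u"
  unfolding lcm01_def
proof (rule cInf_greatest)
  show "{g u |g. concave_on {0..1} g \<and> (\<forall>v\<in>{0..1}. J v \<le> g v)} \<noteq> {}"
    using J_le_B by (auto intro!: exI[of _ "\<lambda>_. B"] simp: concave_on_const convex_real_interval)
qed auto

lemma Jh_conc: "concave_on {0..1} Jh"
  unfolding concave_on_iff
proof (intro conjI ballI allI impI)
  fix x y a b :: real assume xy: "x \<in> {0..1}" "y \<in> {0..1}" and ab: "a \<ge> 0" "b \<ge> 0" "a + b = 1"
  have pt: "a *\<^sub>R x + b *\<^sub>R y \<in> {0..1}"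
    using convexD[OF convex_real_interval(5)[of 0 1] xy ab(1,2,3)] by simp
  show "a * Jh x + b * Jh y \<le> Jh (a *\<^sub>R x + b *\<^sub>R y)"
    unfolding lcm01_def[of J "a *\<^sub>R x + b *\<^sub>R y"]
  proof (rule cInf_greatest)
    show "{g (a *\<^sub>R x + b *\<^sub>R y) |g. concave_on {0..1} g \<and> (\<forall>v\<in>{0..1}. J v \<le> g v)} \<noteq> {}"
      using J_le_B by (auto intro!: exI[of _ "\<lambda>_. B"] simp: concave_on_const convex_real_interval)
  next
    fix t assume "t \<in> {g (a *\<^sub>R x + b *\<^sub>R y) |g. concave_on {0..1} g \<and> (\<forall>v\<in>{0..1}. J v \<le> g v)}"
    then obtain g where g: "t = g (a *\<^sub>R x + b *\<^sub>R y)" "concave_on {0..1} g" "\<forall>v\<in>{0..1}. J v \<le> g v"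
      by auto
    have "a * Jh x \<le> a * g x" using Jh_le[OF g(2,3) xy(1)] ab by (simp add: mult_left_mono)
    moreover have "b * Jh y \<le> b * g y" using Jh_le[OF g(2,3) xy(2)] ab by (simp add: mult_left_mono)
    moreover have "a * g x + b * g y \<le> g (a *\<^sub>R x + b *\<^sub>R y)"
      using g(2) xy ab unfolding concave_on_iff by blast
    ultimately show "a * Jh x + b * Jh y \<le> t" using g(1) by linarith
  qed
qed (simp add: convex_real_interval)

abbreviation "psi \<equiv> psi_star p"

lemma psi_antimono: "z \<le> z' \<Longrightarrow> psi z' \<le> psi z"
  unfolding psi_star_def
  by (rule rderiv01_antimono[OF Jh_conc]) (auto simp: F_nonneg F_le1 F_mono)

lemma psi_lt1: "F z < 1 \<Longrightarrow> psi z = rderiv Jh (F z)"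
  unfolding psi_star_def rderiv01_def by simp

lemma p_pos_ex: "\<exists>z. p z > 0"
proof (rule ccontr)
  assume "\<not> (\<exists>z. p z > 0)"
  then have "p = (\<lambda>_. 0)" using nonneg by (intro ext) (meson linorder_not_le order.antisym)
  then show False using total by simp
qed

lemma zmin_ne: "zmin p \<noteq> \<infinity>"
proof -
  obtain z where "p z > 0" using p_pos_ex by blast
  then have "zmin p \<le> ereal z" unfolding zmin_def by (intro Inf_lower) auto
  then show ?thesis by auto
qed

lemma zmax_ne: "zmax p \<noteq> -\<infinity>"
proof -
  obtain z where "p z > 0" using p_pos_ex by blast
  then have "ereal z \<le> zmax p" unfolding zmax_def by (intro Sup_upper) auto
  then show ?thesis by auto
qed

lemma zmin_F_pos: "zmin p < ereal z \<Longrightarrow> 0 < F z"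
proof -
  assume "zmin p < ereal z"
  then obtain y where y: "p y > 0" "ereal y < ereal z" unfolding zmin_def by (auto simp: Inf_less_iff)
  then have "F (y - 1) < F z" by (intro F_strict[of _ _ y]) auto
  then show ?thesis using F_nonneg[of "y - 1"] by simp
qed

lemma zmax_F_lt1: "ereal z < zmax p \<Longrightarrow> F z < 1"
proof -
  assume "ereal z < zmax p"
  then obtain y where y: "p y > 0" "ereal z < ereal y" unfolding zmax_def by (auto simp: less_Sup_iff)
  then have "F z < F (y + 1)" by (intro F_strict[of _ _ y]) auto
  then show ?thesis using F_le1[of "y + 1"] by simp
qed

lemma zmin_p0: "zmin p = ereal a \<Longrightarrow> z \<le> a \<Longrightarrow> p z = 0"
proof -
  assume a: "zmin p = ereal a" and z: "z \<le> a"
  have lt: "p y = 0" if "y < a" for y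
  proof (rule ccontr)
    assume "p y \<noteq> 0"
    then have "p y > 0" using nonneg[of y] by simp
    then have "zmin p \<le> ereal y" unfolding zmin_def by (intro Inf_lower) auto
    then show False using a that by simp
  qed
  have "p a = 0"
  proof -
    have "(p \<longlongrightarrow> p a) (at_left a)"
      using p_isCont[of a] unfolding isCont_def by (rule tendsto_mono[OF at_le, rotated]) simp
    moreover have "\<forall>\<^sub>F y in at_left a. p y = 0"
      unfolding eventually_at_left_field using lt by (intro exI[of _ "a - 1"]) auto
    then have "\<forall>\<^sub>F y in at_left a. p y \<le> 0" by (auto elim: eventually_mono)
    ultimately have "p a \<le> 0" by (rule tendsto_upperbound) simp
    then show ?thesis using nonneg[of a] by simp
  qed
  then show ?thesis using lt z by (cases "z = a") auto
qed

lemma zmax_p0: "zmax p = ereal b \<Longrightarrow> b \<le> z \<Longrightarrow> p z = 0"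
proof -
  assume b: "zmax p = ereal b" and z: "b \<le> z"
  have gt: "p y = 0" if "b < y" for y
  proof (rule ccontr)
    assume "p y \<noteq> 0"
    then have "p y > 0" using nonneg[of y] by simp
    then have "ereal y \<le> zmax p" unfolding zmax_def by (intro Sup_upper) auto
    then show False using b that by simp
  qed
  have "p b = 0"
  proof -
    have "(p \<longlongrightarrow> p b) (at_right b)"
      using p_isCont[of b] unfolding isCont_def by (rule tendsto_mono[OF at_le, rotated]) simp
    moreover have "\<forall>\<^sub>F y in at_right b. p y = 0"
      unfolding eventually_at_right_field using gt by (intro exI[of _ "b + 1"]) auto
    then have "\<forall>\<^sub>F y in at_right b. p y \<le> 0" by (auto elim: eventually_mono)
    ultimately have "p b \<le> 0" by (rule tendsto_upperbound) simp
    then show ?thesis using nonneg[of b] by simp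
  qed
  then show ?thesis using gt z by (cases "z = b") auto
qed

lemma zmin_F0: "zmin p = ereal a \<Longrightarrow> F a = 0"
proof -
  assume a: "zmin p = ereal a"
  have "F a = (LINT x:{..a}|lborel. (0::real))" unfolding cdf_of_def
    by (rule set_lebesgue_integral_cong) (auto simp: zmin_p0[OF a])
  then show ?thesis by simp
qed

lemma zmax_F1: "zmax p = ereal b \<Longrightarrow> F b = 1"
proof -
  assume b: "zmax p = ereal b"
  have "F y \<le> F b" if "b \<le> y" for y
    using int_upper[OF that, of 0] zmax_p0[OF b] by auto
  then have "\<forall>\<^sub>F y in at_top. F y \<le> F b" by (auto simp: eventually_at_top_linorder)
  then have "1 \<le> F b" using F_top by (intro tendsto_upperbound) auto
  then show ?thesis using F_le1[of b] by simp
qed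

lemma EV_a: "\<forall>\<^sub>F z in from_above (zmin p). 0 < F z \<and> F z < 1/2"
proof (cases "zmin p")
  case (real a)
  have "(F \<longlongrightarrow> F a) (at_right a)"
    using F_isCont[of a] unfolding isCont_def by (rule tendsto_mono[OF at_le, rotated]) simp
  then have "\<forall>\<^sub>F z in at_right a. F z < 1/2" using zmin_F0[OF real] by (intro order_tendstoD(2)) auto
  moreover have "\<forall>\<^sub>F z in at_right a. 0 < F z"
    unfolding eventually_at_right_field using zmin_F_pos real by (intro exI[of _ "a + 1"]) auto
  ultimately show ?thesis using real unfolding from_above_def by (auto elim: eventually_elim2)
next
  case PInf then show ?thesis using zmin_ne by simp
next
  case MInf
  have "\<forall>\<^sub>F z in at_bot. F z < 1/2" using F_bot by (intro order_tendstoD(2)) auto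
  then show ?thesis using MInf zmin_F_pos unfolding from_above_def by (auto elim: eventually_mono)
qed

lemma EV_b: "\<forall>\<^sub>F z in from_below (zmax p). 1/2 < F z \<and> F z < 1"
proof (cases "zmax p")
  case (real b)
  have "(F \<longlongrightarrow> F b) (at_left b)"
    using F_isCont[of b] unfolding isCont_def by (rule tendsto_mono[OF at_le, rotated]) simp
  then have "\<forall>\<^sub>F z in at_left b. 1/2 < F z" using zmax_F1[OF real] by (intro order_tendstoD(1)) auto
  moreover have "\<forall>\<^sub>F z in at_left b. F z < 1"
    unfolding eventually_at_left_field using zmax_F_lt1 real by (intro exI[of _ "b - 1"]) auto
  ultimately show ?thesis using real unfolding from_below_def by (auto elim: eventually_elim2)
next
  case MInf then show ?thesis using zmax_ne by simp
next
  case PInf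
  have "\<forall>\<^sub>F z in at_top. 1/2 < F z" using F_top by (intro order_tendstoD(1)) auto
  then show ?thesis using PInf zmax_F_lt1 unfolding from_below_def by (auto elim: eventually_mono)
qed

end



lemma antimono_lim_bot:
  fixes f :: "real \<Rightarrow> ereal"
  assumes mono: "\<And>x y. x \<le> y \<Longrightarrow> f y \<le> f x"
  shows "(f \<longlongrightarrow> (SUP x. f x)) at_bot"
proof (rule order_tendstoI)
  fix a assume "a < (SUP x. f x)"
  then obtain x0 where x0: "a < f x0" by (auto simp: less_SUP_iff)
  show "\<forall>\<^sub>F x in at_bot. a < f x"
    unfolding eventually_at_bot_linorder
    using x0 mono by (intro exI[of _ x0]) (auto intro: less_le_trans)
next
  fix a assume a: "(SUP x. f x) < a"
  have "f x < a" for x using a by (meson SUP_upper UNIV_I le_less_trans)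
  then show "\<forall>\<^sub>F x in at_bot. f x < a" by simp
qed

lemma antimono_lim_top:
  fixes f :: "real \<Rightarrow> ereal"
  assumes mono: "\<And>x y. x \<le> y \<Longrightarrow> f y \<le> f x"
  shows "(f \<longlongrightarrow> (INF x. f x)) at_top"
proof (rule order_tendstoI)
  fix a assume a: "a < (INF x. f x)"
  have "a < f x" for x using a by (meson INF_lower UNIV_I less_le_trans)
  then show "\<forall>\<^sub>F x in at_top. a < f x" by simp
next
  fix a assume "(INF x. f x) < a"
  then obtain x0 where x0: "f x0 < a" by (auto simp: INF_less_iff)
  show "\<forall>\<^sub>F x in at_top. f x < a"
    unfolding eventually_at_top_linorder
    using x0 mono by (intro exI[of _ x0]) (auto intro: le_less_trans)
qed

lemma limsup_fin_iff:
  "Limsup F (\<lambda>z. ereal (h z)) < \<infinity> \<longleftrightarrow> (\<exists>K. \<forall>\<^sub>F z in F. h z \<le> K)"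
proof
  assume L: "Limsup F (\<lambda>z. ereal (h z)) < \<infinity>"
  obtain K where K: "Limsup F (\<lambda>z. ereal (h z)) < ereal K"
  proof (cases "Limsup F (\<lambda>z. ereal (h z))")
    case (real r) then show ?thesis using that[of "r + 1"] by simp
  next
    case MInf then show ?thesis using that[of 0] by simp
  qed (use L in simp)
  then have "\<forall>\<^sub>F z in F. ereal (h z) < ereal K" by (rule Limsup_lessD)
  then show "\<exists>K. \<forall>\<^sub>F z in F. h z \<le> K" by (intro exI[of _ K]) (auto elim: eventually_mono)
next
  assume "\<exists>K. \<forall>\<^sub>F z in F. h z \<le> K"
  then obtain K where "\<forall>\<^sub>F z in F. h z \<le> K" by blast
  then have "\<forall>\<^sub>F z in F. ereal (h z) \<le> ereal K" by (auto elim: eventually_mono)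
  then have "Limsup F (\<lambda>z. ereal (h z)) \<le> ereal K" by (rule Limsup_bounded)
  then show "Limsup F (\<lambda>z. ereal (h z)) < \<infinity>" by (rule le_less_trans) simp
qed

context dens begin

lemma hz_le: "0 < F z \<Longrightarrow> F z < 1/2 \<Longrightarrow> hazard2 p z \<le> K \<Longrightarrow> p z \<le> K * F z"
  unfolding hazard2_def by (simp add: min_def pos_divide_le_eq)

lemma hz_ge: "0 < F z \<Longrightarrow> F z < 1/2 \<Longrightarrow> p z \<le> K * F z \<Longrightarrow> hazard2 p z \<le> K"
  unfolding hazard2_def by (simp add: min_def pos_divide_le_eq)

lemma hz_le1: "1/2 < F z \<Longrightarrow> F z < 1 \<Longrightarrow> hazard2 p z \<le> K \<Longrightarrow> p z \<le> K * (1 - F z)"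
  unfolding hazard2_def by (simp add: min_def pos_divide_le_eq)

lemma hz_ge1: "1/2 < F z \<Longrightarrow> F z < 1 \<Longrightarrow> p z \<le> K * (1 - F z) \<Longrightarrow> hazard2 p z \<le> K"
  unfolding hazard2_def by (simp add: min_def pos_divide_le_eq)

lemma LA1: "(\<exists>L. (psi \<longlongrightarrow> L) at_bot \<and> L < \<infinity>) \<longleftrightarrow> (SUP z. psi z) < \<infinity>"
proof
  assume "\<exists>L. (psi \<longlongrightarrow> L) at_bot \<and> L < \<infinity>"
  then obtain L where L: "(psi \<longlongrightarrow> L) at_bot" "L < \<infinity>" by blast
  have "L = (SUP z. psi z)"
    using tendsto_unique[OF _ L(1) antimono_lim_bot[OF psi_antimono]] by simp
  then show "(SUP z. psi z) < \<infinity>" using L by simp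
next
  assume "(SUP z. psi z) < \<infinity>"
  then show "\<exists>L. (psi \<longlongrightarrow> L) at_bot \<and> L < \<infinity>"
    using antimono_lim_bot[of psi] psi_antimono by blast
qed

lemma LB1: "(\<exists>L. (psi \<longlongrightarrow> L) at_top \<and> L > -\<infinity>) \<longleftrightarrow> (INF z. psi z) > -\<infinity>"
proof
  assume "\<exists>L. (psi \<longlongrightarrow> L) at_top \<and> L > -\<infinity>"
  then obtain L where L: "(psi \<longlongrightarrow> L) at_top" "L > -\<infinity>" by blast
  have "L = (INF z. psi z)"
    using tendsto_unique[OF _ L(1) antimono_lim_top[OF psi_antimono]] by simp
  then show "(INF z. psi z) > -\<infinity>" using L by simp
next
  assume "(INF z. psi z) > -\<infinity>"
  then show "\<exists>L. (psi \<longlongrightarrow> L) at_top \<and> L > -\<infinity>"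
    using antimono_lim_top[of psi] psi_antimono by blast
qed

lemma Jh_affine: "(\<And>u. u \<in> {0..1} \<Longrightarrow> J u \<le> c + d * u) \<Longrightarrow> u \<in> {0..1} \<Longrightarrow> Jh u \<le> c + d * u"
  using Jh_le[OF concave_affine[of c d]] by blast

lemma LA2:
  assumes S: "(SUP z. psi z) < \<infinity>"
  shows "\<exists>K. \<forall>u\<in>{0<..<1}. J u \<le> K * u"
proof -
  obtain K0 where K0: "(SUP z. psi z) < ereal K0"
  proof (cases "(SUP z. psi z)")
    case (real r) then show ?thesis using that[of "r + 1"] by simp
  next
    case MInf then show ?thesis using that[of 0] by simp
  qed (use S in simp)
  define K where "K = max K0 0"
  have K: "K \<ge> 0" "\<And>z. psi z \<le> ereal K"
  proof -
    fix z
    have "psi z \<le> (SUP z. psi z)" by (rule SUP_upper) simp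
    then have "psi z < ereal K0" using K0 by (rule le_less_trans)
    moreover have "ereal K0 \<le> ereal K" unfolding K_def by simp
    ultimately show "psi z \<le> ereal K" by (meson less_imp_le order.trans)
  qed (simp add: K_def)
  have R: "rderiv Jh u \<le> ereal K" if u: "0 < u" "u < 1" for u
  proof -
    obtain q where q: "quantile p u = ereal q" "F q = u" using quantile_mid[OF u] by blast
    then show ?thesis using psi_lt1[of q] K(2)[of q] u by simp
  qed
  have "Jh u \<le> K * u" if u: "0 < u" "u < 1" for u
  proof (rule field_le_epsilon)
    fix e :: real assume e: "e > 0"
    obtain d where d: "d > 0" "\<forall>v\<in>{0..1}. J v \<le> e/2 + v / d"
      using J_small0[of "e/2"] e by auto
    have Jhd: "Jh v \<le> e/2 + (1/d) * v" if "v \<in> {0..1}" for v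
      using Jh_affine[of "e/2" "1/d" v] d that by auto
    define w where "w = min (u/2) (d * e / 2)"
    have w: "0 < w" "w < u" "w \<le> d * e / 2" using u d e unfolding w_def by auto
    have "Jh w \<le> e/2 + (1/d) * w" using Jhd[of w] w u by auto
    also have "(1/d) * w \<le> e/2" using w(3) d by (simp add: field_simps)
    finally have Jw: "Jh w \<le> e" by simp
    have "ereal (slope Jh w u) \<le> rderiv Jh w" by (rule rderiv_lower[OF Jh_conc]) (use w u in auto)
    also have "\<dots> \<le> ereal K" using R[of w] w u by auto
    finally have "slope Jh w u \<le> K" by simp
    then have "Jh u - Jh w \<le> K * (u - w)" unfolding slope_def using w by (simp add: pos_divide_le_eq)
    also have "\<dots> \<le> K * u" using K(1) w by (simp add: mult_left_mono)
    finally show "Jh u \<le> K * u + e" using Jw by simp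
  qed
  then have "J u \<le> K * u" if "u \<in> {0<..<1}" for u using Jh_ge[of u] that by fastforce
  then show ?thesis by blast
qed

lemma LB2:
  assumes S: "(INF z. psi z) > -\<infinity>"
  shows "\<exists>K. \<forall>u\<in>{0<..<1}. J u \<le> K * (1 - u)"
proof -
  obtain K0 where K0: "(INF z. psi z) > ereal (- K0)"
  proof (cases "(INF z. psi z)")
    case (real r) then show ?thesis using that[of "1 - r"] by simp
  next
    case PInf then show ?thesis using that[of 0] by simp
  qed (use S in simp)
  define K where "K = max K0 0"
  have K: "K \<ge> 0" "\<And>z. ereal (- K) \<le> psi z"
  proof -
    fix z
    have "(INF z. psi z) \<le> psi z" by (rule INF_lower) simp
    moreover have "ereal (- K) \<le> ereal (- K0)" unfolding K_def by simp
    ultimately show "ereal (- K) \<le> psi z" using K0 by (meson less_imp_le order.trans)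
  qed (simp add: K_def)
  have R: "ereal (- K) \<le> rderiv Jh u" if u: "0 < u" "u < 1" for u
  proof -
    obtain q where q: "quantile p u = ereal q" "F q = u" using quantile_mid[OF u] by blast
    then show ?thesis using psi_lt1[of q] K(2)[of q] u by simp
  qed
  have "Jh u \<le> K * (1 - u)" if u: "0 < u" "u < 1" for u
  proof (rule field_le_epsilon)
    fix e :: real assume e: "e > 0"
    obtain d where d: "d > 0" "\<forall>v\<in>{0..1}. J v \<le> e/2 + (1 - v) / d"
      using J_small1[of "e/2"] e by auto
    have Jhd: "Jh v \<le> (e/2 + 1/d) + (- 1/d) * v" if "v \<in> {0..1}" for v
    proof (rule Jh_affine[OF _ that])
      fix v' :: real assume "v' \<in> {0..1}"
      then have "J v' \<le> e/2 + (1 - v') / d" using d by auto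
      also have "\<dots> = (e/2 + 1/d) + (- 1/d) * v'" using d(1) by (simp add: field_simps)
      finally show "J v' \<le> (e/2 + 1/d) + (- 1/d) * v'" .
    qed
    define w where "w = max ((1 + u)/2) (1 - d * e / 2)"
    have de: "d * e > 0" using d e by simp
    have w: "u < w" "w < 1" "1 - w \<le> d * e / 2" using u de unfolding w_def by (auto simp: max_def field_simps)
    have "Jh w \<le> (e/2 + 1/d) + (- 1/d) * w" using Jhd[of w] w u by auto
    also have "\<dots> = e/2 + (1 - w) / d" using d by (simp add: field_simps)
    also have "(1 - w) / d \<le> e/2" using w(3) d by (simp add: field_simps)
    finally have Jw: "Jh w \<le> e" by simp
    have "ereal (- K) \<le> rderiv Jh w" using R[of w] w u by auto
    also have "\<dots> \<le> ereal (slope Jh u w)" by (rule rderiv_upper[OF Jh_conc]) (use w u in auto)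
    finally have "- K \<le> slope Jh u w" by simp
    then have "- K * (w - u) \<le> Jh w - Jh u" unfolding slope_def using w by (simp add: pos_le_divide_eq)
    moreover have "K * (w - u) \<le> K * (1 - u)" using K(1) w by (simp add: mult_left_mono)
    ultimately show "Jh u \<le> K * (1 - u) + e" using Jw by simp
  qed
  then have "J u \<le> K * (1 - u)" if "u \<in> {0<..<1}" for u using Jh_ge[of u] that by fastforce
  then show ?thesis by blast
qed

lemma LA3:
  assumes H: "\<forall>u\<in>{0<..<1}. J u \<le> K * u"
  shows "\<forall>\<^sub>F z in from_above (zmin p). hazard2 p z \<le> K"
  using EV_a
proof (rule eventually_mono)
  fix z assume z: "0 < F z \<and> F z < 1/2"
  then have "p z = J (F z)" using J_at_F by simp
  also have "\<dots> \<le> K * F z" using H z by auto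
  finally show "hazard2 p z \<le> K" using z by (intro hz_ge) auto
qed

lemma LB3:
  assumes H: "\<forall>u\<in>{0<..<1}. J u \<le> K * (1 - u)"
  shows "\<forall>\<^sub>F z in from_below (zmax p). hazard2 p z \<le> K"
  using EV_b
proof (rule eventually_mono)
  fix z assume z: "1/2 < F z \<and> F z < 1"
  then have "p z = J (F z)" using J_at_F by simp
  also have "\<dots> \<le> K * (1 - F z)" using H z by auto
  finally show "hazard2 p z \<le> K" using z by (intro hz_ge1) auto
qed

end



context dens begin

lemma p_cont_on: "continuous_on S p"
  using p_isCont by (simp add: continuous_at_imp_continuous_on)

lemma LA4:
  assumes ev: "\<forall>\<^sub>F z in from_above (zmin p). hazard2 p z \<le> K"
  shows "zmin p = -\<infinity>"
proof (cases "zmin p")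
  case PInf then show ?thesis using zmin_ne by simp
next
  case MInf then show ?thesis .
next
  case (real a)
  define K1 where "K1 = max K 1"
  have K1: "K1 \<ge> 1" "K \<le> K1" unfolding K1_def by auto
  have fa: "from_above (zmin p) = at_right a" using real by (simp add: from_above_def)
  have "\<forall>\<^sub>F z in at_right a. p z \<le> K1 * F z"
    using eventually_conj[OF ev EV_a] unfolding fa
  proof (rule eventually_mono)
    fix z assume z: "hazard2 p z \<le> K \<and> 0 < F z \<and> F z < 1/2"
    then have "p z \<le> K * F z" by (intro hz_le) auto
    also have "\<dots> \<le> K1 * F z" using K1 z by (simp add: mult_right_mono)
    finally show "p z \<le> K1 * F z" .
  qed
  then obtain d where d: "d > a" "\<And>z. a < z \<Longrightarrow> z < d \<Longrightarrow> p z \<le> K1 * F z"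
    unfolding eventually_at_right_field by blast
  define e where "e = min ((d - a)/2) (1 / (2 * K1))"
  have e: "e > 0" "a + e < d" "K1 * e \<le> 1/2"
    using d K1 unfolding e_def by (auto simp: min_def field_simps)
  obtain t where t: "t \<in> {a..a+e}" "\<And>y. y \<in> {a..a+e} \<Longrightarrow> p y \<le> p t"
    using continuous_attains_sup[of "{a..a+e}" p] p_cont_on e by auto
  have "p t \<le> 0"
  proof (cases "t = a")
    case True then show ?thesis using zmin_p0[OF real] by simp
  next
    case False
    then have ta: "a < t" "t < d" using t e by auto
    have "F (a + e) - F a \<le> p t * (a + e - a)"
      by (rule int_upper) (use e t in auto)
    then have Fae: "F (a + e) \<le> p t * e" using zmin_F0[OF real] by simp
    have "p t \<le> K1 * F t" using d ta by auto
    also have "\<dots> \<le> K1 * F (a + e)" using K1 t by (intro mult_left_mono F_mono) auto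
    also have "\<dots> \<le> K1 * (p t * e)" using K1 Fae by (intro mult_left_mono) auto
    also have "\<dots> = p t * (K1 * e)" by simp
    also have "\<dots> \<le> p t * (1/2)" using e nonneg[of t] by (intro mult_left_mono) auto
    finally show ?thesis by simp
  qed
  then have zero: "p y = 0" if "y \<in> {a..a+e}" for y using t(2)[OF that] nonneg[of y] by simp
  have "zmin p < ereal (a + e)" using real e by simp
  then obtain y where y: "p y > 0" "ereal y < ereal (a + e)" unfolding zmin_def by (auto simp: Inf_less_iff)
  have "zmin p \<le> ereal y" using y(1) unfolding zmin_def by (intro Inf_lower) auto
  then have "y \<in> {a..a+e}" using y(2) real by auto
  then show ?thesis using zero y(1) by simp
qed

lemma LB4:
  assumes ev: "\<forall>\<^sub>F z in from_below (zmax p). hazard2 p z \<le> K"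
  shows "zmax p = \<infinity>"
proof (cases "zmax p")
  case MInf then show ?thesis using zmax_ne by simp
next
  case PInf then show ?thesis .
next
  case (real b)
  define K1 where "K1 = max K 1"
  have K1: "K1 \<ge> 1" "K \<le> K1" unfolding K1_def by auto
  have fb: "from_below (zmax p) = at_left b" using real by (simp add: from_below_def)
  have "\<forall>\<^sub>F z in at_left b. p z \<le> K1 * (1 - F z)"
    using eventually_conj[OF ev EV_b] unfolding fb
  proof (rule eventually_mono)
    fix z assume z: "hazard2 p z \<le> K \<and> 1/2 < F z \<and> F z < 1"
    then have "p z \<le> K * (1 - F z)" by (intro hz_le1) auto
    also have "\<dots> \<le> K1 * (1 - F z)" using K1 z by (simp add: mult_right_mono)
    finally show "p z \<le> K1 * (1 - F z)" .
  qed
  then obtain d where d: "d < b" "\<And>z. d < z \<Longrightarrow> z < b \<Longrightarrow> p z \<le> K1 * (1 - F z)"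
    unfolding eventually_at_left_field by blast
  define e where "e = min ((b - d)/2) (1 / (2 * K1))"
  have e: "e > 0" "d < b - e" "K1 * e \<le> 1/2"
    using d K1 unfolding e_def by (auto simp: min_def field_simps)
  obtain t where t: "t \<in> {b-e..b}" "\<And>y. y \<in> {b-e..b} \<Longrightarrow> p y \<le> p t"
    using continuous_attains_sup[of "{b-e..b}" p] p_cont_on e by auto
  have "p t \<le> 0"
  proof (cases "t = b")
    case True then show ?thesis using zmax_p0[OF real] by simp
  next
    case False
    then have tb: "d < t" "t < b" using t e by auto
    have "F b - F (b - e) \<le> p t * (b - (b - e))"
      by (rule int_upper) (use e t in auto)
    then have Fbe: "1 - F (b - e) \<le> p t * e" using zmax_F1[OF real] by simp
    have "p t \<le> K1 * (1 - F t)" using d tb by auto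
    also have "\<dots> \<le> K1 * (1 - F (b - e))" using K1 t by (intro mult_left_mono) (auto intro: F_mono)
    also have "\<dots> \<le> K1 * (p t * e)" using K1 Fbe by (intro mult_left_mono) auto
    also have "\<dots> = p t * (K1 * e)" by simp
    also have "\<dots> \<le> p t * (1/2)" using e nonneg[of t] by (intro mult_left_mono) auto
    finally show ?thesis by simp
  qed
  then have zero: "p y = 0" if "y \<in> {b-e..b}" for y using t(2)[OF that] nonneg[of y] by simp
  have "ereal (b - e) < zmax p" using real e by simp
  then obtain y where y: "p y > 0" "ereal (b - e) < ereal y" unfolding zmax_def by (auto simp: less_Sup_iff)
  have "ereal y \<le> zmax p" using y(1) unfolding zmax_def by (intro Sup_upper) auto
  then have "y \<in> {b-e..b}" using y(2) real by auto
  then show ?thesis using zero y(1) by simp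
qed

lemma LA5:
  assumes zm: "zmin p = -\<infinity>" and ev: "\<forall>\<^sub>F z in at_bot. hazard2 p z \<le> K"
  shows "(SUP z. psi z) < \<infinity>"
proof -
  have fa: "from_above (zmin p) = at_bot" using zm by (simp add: from_above_def)
  have "\<forall>\<^sub>F z in at_bot. hazard2 p z \<le> K \<and> 0 < F z \<and> F z < 1/2"
    using eventually_conj[OF ev EV_a[unfolded fa]] .
  then obtain N where N: "\<And>z. z \<le> N \<Longrightarrow> hazard2 p z \<le> K \<and> 0 < F z \<and> F z < 1/2"
    unfolding eventually_at_bot_linorder by blast
  have FN: "F N > 0" using N[of N] by simp
  define K' where "K' = max K 0 + B / F N"
  have K'0: "K' \<ge> 0" using B FN unfolding K'_def by simp
  have BF: "B / F N \<ge> 0" using B(1) FN by simp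
  have KK: "K \<le> K'" unfolding K'_def using BF max.cobounded1[of K 0] by linarith
  have JK: "J u \<le> 0 + K' * u" if u: "u \<in> {0..1}" for u
  proof -
    consider "u = 0" | "u = 1" | "0 < u" "u < 1" using u by fastforce
    then show ?thesis
    proof cases
      case 3
      then obtain q where q: "J u = p q" "F q = u" using J_mid by blast
      show ?thesis
      proof (cases "q \<le> N")
        case True
        then have "p q \<le> K * F q" using N[of q] by (intro hz_le) auto
        also have "\<dots> \<le> K' * F q" using KK FN q 3 F_le1[of q]
          by (intro mult_right_mono) auto
        finally show ?thesis using q by simp
      next
        case False
        then have "F N \<le> u" using F_mono[of N q] q by simp
        have "J u \<le> B" by (rule J_le_B)
        also have "B = (B / F N) * F N" using FN by simp
        also have "\<dots> \<le> (B / F N) * u" using \<open>F N \<le> u\<close> B FN by (intro mult_left_mono) auto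
        also have "\<dots> \<le> K' * u" unfolding K'_def using 3 by (intro mult_right_mono) auto
        finally show ?thesis by simp
      qed
    qed (use J0 J1 K'0 in auto)
  qed
  have Jh0: "Jh 0 \<ge> 0" using Jh_ge[of 0] J0 by simp
  have R: "rderiv Jh u \<le> ereal K'" if u: "0 < u" "u < 1" for u
  proof -
    have "rderiv Jh u \<le> ereal (slope Jh 0 u)" by (rule rderiv_upper[OF Jh_conc]) (use u in auto)
    also have "slope Jh 0 u \<le> K'"
    proof -
      have "Jh u \<le> 0 + K' * u" using Jh_affine[OF JK] u by auto
      then show ?thesis unfolding slope_def using u Jh0 by (simp add: pos_divide_le_eq)
    qed
    finally show ?thesis by simp
  qed
  have "psi z \<le> ereal K'" for z
  proof (cases "F z < 1")
    case True
    have "0 < F z" using zmin_F_pos zm by simp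
    then show ?thesis using psi_lt1[OF True] R True by simp
  next
    case False
    then have "F z = 1" using F_le1[of z] by simp
    then have "psi z = rderiv01 Jh 1" unfolding psi_star_def by simp
    also have "\<dots> \<le> rderiv01 Jh (1/2)" by (rule rderiv01_antimono[OF Jh_conc]) auto
    also have "\<dots> = rderiv Jh (1/2)" unfolding rderiv01_def by simp
    also have "\<dots> \<le> ereal K'" by (rule R) auto
    finally show ?thesis .
  qed
  then have "(SUP z. psi z) \<le> ereal K'" by (rule SUP_least)
  then show ?thesis by (rule le_less_trans) simp
qed

lemma LB5:
  assumes zm: "zmax p = \<infinity>" and ev: "\<forall>\<^sub>F z in at_top. hazard2 p z \<le> K"
  shows "(INF z. psi z) > -\<infinity>"
proof -
  have fb: "from_below (zmax p) = at_top" using zm by (simp add: from_below_def)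
  have "\<forall>\<^sub>F z in at_top. hazard2 p z \<le> K \<and> 1/2 < F z \<and> F z < 1"
    using eventually_conj[OF ev EV_b[unfolded fb]] .
  then obtain N where N: "\<And>z. N \<le> z \<Longrightarrow> hazard2 p z \<le> K \<and> 1/2 < F z \<and> F z < 1"
    unfolding eventually_at_top_linorder by blast
  have FN: "F N < 1" using N[of N] by simp
  define K' where "K' = max K 0 + B / (1 - F N)"
  have K'0: "K' \<ge> 0" using B FN unfolding K'_def by simp
  have BF: "B / (1 - F N) \<ge> 0" using B(1) FN by simp
  have KK: "K \<le> K'" unfolding K'_def using BF max.cobounded1[of K 0] by linarith
  have JK: "J u \<le> K' + (- K') * u" if u: "u \<in> {0..1}" for u
  proof -
    have "J u \<le> K' * (1 - u)"
    proof -
      consider "u = 0" | "u = 1" | "0 < u" "u < 1" using u by fastforce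
      then show ?thesis
      proof cases
        case 3
        then obtain q where q: "J u = p q" "F q = u" using J_mid by blast
        show ?thesis
        proof (cases "N \<le> q")
          case True
          then have "p q \<le> K * (1 - F q)" using N[of q] by (intro hz_le1) auto
          also have "\<dots> \<le> K' * (1 - F q)" using KK FN q 3 F_le1[of q]
            by (intro mult_right_mono) auto
          finally show ?thesis using q by simp
        next
          case False
          then have "u \<le> F N" using F_mono[of q N] q by simp
          have "J u \<le> B" by (rule J_le_B)
          also have "B = (B / (1 - F N)) * (1 - F N)" using FN by simp
          also have "\<dots> \<le> (B / (1 - F N)) * (1 - u)" using \<open>u \<le> F N\<close> B FN by (intro mult_left_mono) auto
          also have "\<dots> \<le> K' * (1 - u)" unfolding K'_def using 3 by (intro mult_right_mono) auto
          finally show ?thesis by simp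
        qed
      qed (use J0 J1 K'0 in auto)
    qed
    then show ?thesis by (simp add: algebra_simps)
  qed
  have Jh1: "Jh 1 \<ge> 0" using Jh_ge[of 1] J1 by simp
  have R: "ereal (- K') \<le> rderiv Jh u" if u: "0 \<le> u" "u < 1" for u
  proof -
    have "- K' \<le> slope Jh u 1"
    proof -
      have "Jh u \<le> K' + (- K') * u" using Jh_affine[OF JK] u by auto
      then have "- K' * (1 - u) \<le> Jh 1 - Jh u" using Jh1 by (simp add: algebra_simps)
      then show ?thesis unfolding slope_def using u by (simp add: pos_le_divide_eq)
    qed
    then have "ereal (- K') \<le> ereal (slope Jh u 1)" by simp
    also have "\<dots> \<le> rderiv Jh u" by (rule rderiv_lower[OF Jh_conc]) (use u in auto)
    finally show ?thesis .
  qed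
  have "ereal (- K') \<le> psi z" for z
  proof -
    have "F z < 1" using zmax_F_lt1 zm by simp
    then show ?thesis using psi_lt1 R F_nonneg[of z] by simp
  qed
  then have "ereal (- K') \<le> (INF z. psi z)" by (rule INF_greatest)
  have "-\<infinity> < ereal (- K')" by simp
  then show ?thesis using \<open>ereal (- K') \<le> (INF z. psi z)\<close> by (rule less_le_trans)
qed

end

theorem lemma2p5:
  fixes p :: "real \<Rightarrow> real"
  assumes nonneg: "\<And>z. p z \<ge> 0"
    and integrable: "integrable lborel p"
    and total: "integral\<^sup>L lborel p = 1"
    and unif: "uniformly_continuous_on UNIV p"
  shows "((\<exists>L. (psi_star p \<longlongrightarrow> L) at_bot \<and> L < \<infinity>) \<longleftrightarrow>
            Limsup (from_above (zmin p)) (\<lambda>z. ereal (hazard2 p z)) < \<infinity>)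
       \<and> ((\<exists>L. (psi_star p \<longlongrightarrow> L) at_bot \<and> L < \<infinity>) \<longrightarrow> zmin p = -\<infinity>)
       \<and> ((\<exists>L. (psi_star p \<longlongrightarrow> L) at_top \<and> L > -\<infinity>) \<longleftrightarrow>
            Limsup (from_below (zmax p)) (\<lambda>z. ereal (hazard2 p z)) < \<infinity>)
       \<and> ((\<exists>L. (psi_star p \<longlongrightarrow> L) at_top \<and> L > -\<infinity>) \<longrightarrow> zmax p = \<infinity>)"
proof -
  interpret dens p using assms by unfold_locales
  have a: "(\<exists>L. (psi \<longlongrightarrow> L) at_bot \<and> L < \<infinity>) \<longleftrightarrow> (\<exists>K. \<forall>\<^sub>F z in from_above (zmin p). hazard2 p z \<le> K)"
  proof
    assume "\<exists>L. (psi \<longlongrightarrow> L) at_bot \<and> L < \<infinity>"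
    then have "(SUP z. psi z) < \<infinity>" using LA1 by blast
    then obtain K where "\<forall>u\<in>{0<..<1}. J u \<le> K * u" using LA2 by blast
    then show "\<exists>K. \<forall>\<^sub>F z in from_above (zmin p). hazard2 p z \<le> K" using LA3 by blast
  next
    assume "\<exists>K. \<forall>\<^sub>F z in from_above (zmin p). hazard2 p z \<le> K"
    then obtain K where K: "\<forall>\<^sub>F z in from_above (zmin p). hazard2 p z \<le> K" by blast
    then have zm: "zmin p = -\<infinity>" by (rule LA4)
    then have "\<forall>\<^sub>F z in at_bot. hazard2 p z \<le> K" using K unfolding from_above_def by simp
    then have "(SUP z. psi z) < \<infinity>" using LA5[OF zm] by blast
    then show "\<exists>L. (psi \<longlongrightarrow> L) at_bot \<and> L < \<infinity>" using LA1 by blast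
  qed
  have b: "(\<exists>L. (psi \<longlongrightarrow> L) at_top \<and> L > -\<infinity>) \<longleftrightarrow> (\<exists>K. \<forall>\<^sub>F z in from_below (zmax p). hazard2 p z \<le> K)"
  proof
    assume "\<exists>L. (psi \<longlongrightarrow> L) at_top \<and> L > -\<infinity>"
    then have "(INF z. psi z) > -\<infinity>" using LB1 by blast
    then obtain K where "\<forall>u\<in>{0<..<1}. J u \<le> K * (1 - u)" using LB2 by blast
    then show "\<exists>K. \<forall>\<^sub>F z in from_below (zmax p). hazard2 p z \<le> K" using LB3 by blast
  next
    assume "\<exists>K. \<forall>\<^sub>F z in from_below (zmax p). hazard2 p z \<le> K"
    then obtain K where K: "\<forall>\<^sub>F z in from_below (zmax p). hazard2 p z \<le> K" by blast
    then have zm: "zmax p = \<infinity>" by (rule LB4)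
    then have "\<forall>\<^sub>F z in at_top. hazard2 p z \<le> K" using K unfolding from_below_def by simp
    then have "(INF z. psi z) > -\<infinity>" using LB5[OF zm] by blast
    then show "\<exists>L. (psi \<longlongrightarrow> L) at_top \<and> L > -\<infinity>" using LB1 by blast
  qed
  show ?thesis
    unfolding limsup_fin_iff a b using LA4 LB4 by blast
qed


end
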